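(* Let $G$ be a connected graph. (1) If $\gamma_P(G) = \gamma(G)$, then $\gamma_P(G \Box P_n) = \gamma(G)$ for every path $P_n$ with $n\ge 1$ vertices. (2) If $\gamma_P(G) = Z(G)$ and $H$ is a connected graph with $\gamma(H) = 1$, then $\gamma_P(G \Box H) = Z(G)$. (3) If $H$ is a connected graph with $v_s(G) = \gamma(G)$ and $v_s(H) = Z(H)$, then $\gamma_P(G \Box H) = \gamma(G)Z(H)$.
   Context: $\gamma(G)$ is the domination number. Zero forcing: starting from an observed set, repeatedly any vertex that is the only unobserved neighbor of some observed vertex becomes observed; $Z(G)$ is the minimum size of a set that eventually observes all vertices. Power domination: for $S\subseteq V(G)$, first all vertices of $S$ and their neighbors are observed, then the zero forcing rule is applied repeatedly; $\gamma_P(G)$ is the minimum size of an $S$ that eventually observes all vertices. A strong support vertex is a vertex adjacent to at least two leaves; $v_s(G)$ is the number of strong support vertices of $G$. $P_n$ is the path on $n$ vertices. $G\Box H$ is the Cartesian product: vertex set $V(G)\times V(H)$, with $(g_1,h_1)\sim(g_2,h_2)$ iff ($g_1=g_2$ and $h_1h_2\in E(H)$) or ($h_1=h_2$ and $g_1g_2\in E(G)$). *)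

theory Defs
  imports Main
begin

definition graph :: "'a set \<Rightarrow> ('a \<Rightarrow> 'a \<Rightarrow> bool) \<Rightarrow> bool" where
  "graph V E \<longleftrightarrow> finite V \<and> (\<forall>x y. E x y \<longrightarrow> x \<in> V \<and> y \<in> V)
     \<and> (\<forall>x y. E x y \<longrightarrow> E y x) \<and> (\<forall>x. \<not> E x x)"

definition connected_graph :: "'a set \<Rightarrow> ('a \<Rightarrow> 'a \<Rightarrow> bool) \<Rightarrow> bool" where
  "connected_graph V E \<longleftrightarrow> graph V E \<and> V \<noteq> {} \<and> (\<forall>x\<in>V. \<forall>y\<in>V. E\<^sup>*\<^sup>* x y)"

definition dominating_set :: "'a set \<Rightarrow> ('a \<Rightarrow> 'a \<Rightarrow> bool) \<Rightarrow> 'a set \<Rightarrow> bool" where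
  "dominating_set V E S \<longleftrightarrow> S \<subseteq> V \<and> (\<forall>v\<in>V. v \<in> S \<or> (\<exists>u\<in>S. E u v))"

definition domination_number :: "'a set \<Rightarrow> ('a \<Rightarrow> 'a \<Rightarrow> bool) \<Rightarrow> nat" where
  "domination_number V E = (LEAST k. \<exists>S. dominating_set V E S \<and> card S = k)"

inductive_set zf_closure :: "'a set \<Rightarrow> ('a \<Rightarrow> 'a \<Rightarrow> bool) \<Rightarrow> 'a set \<Rightarrow> 'a set"
  for V E S where
  base: "v \<in> S \<Longrightarrow> v \<in> zf_closure V E S"
| force: "u \<in> zf_closure V E S \<Longrightarrow> E u v \<Longrightarrow>
     (\<forall>w. E u w \<and> w \<noteq> v \<longrightarrow> w \<in> zf_closure V E S) \<Longrightarrow> v \<in> zf_closure V E S"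

definition zero_forcing_set :: "'a set \<Rightarrow> ('a \<Rightarrow> 'a \<Rightarrow> bool) \<Rightarrow> 'a set \<Rightarrow> bool" where
  "zero_forcing_set V E S \<longleftrightarrow> S \<subseteq> V \<and> zf_closure V E S = V"

definition zero_forcing_number :: "'a set \<Rightarrow> ('a \<Rightarrow> 'a \<Rightarrow> bool) \<Rightarrow> nat" where
  "zero_forcing_number V E = (LEAST k. \<exists>S. zero_forcing_set V E S \<and> card S = k)"

definition closed_nbhd_set :: "'a set \<Rightarrow> ('a \<Rightarrow> 'a \<Rightarrow> bool) \<Rightarrow> 'a set \<Rightarrow> 'a set" where
  "closed_nbhd_set V E S = S \<union> {v \<in> V. \<exists>u\<in>S. E u v}"

definition power_dominating_set :: "'a set \<Rightarrow> ('a \<Rightarrow> 'a \<Rightarrow> bool) \<Rightarrow> 'a set \<Rightarrow> bool" where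
  "power_dominating_set V E S \<longleftrightarrow> S \<subseteq> V \<and> zf_closure V E (closed_nbhd_set V E S) = V"

definition power_domination_number :: "'a set \<Rightarrow> ('a \<Rightarrow> 'a \<Rightarrow> bool) \<Rightarrow> nat" where
  "power_domination_number V E = (LEAST k. \<exists>S. power_dominating_set V E S \<and> card S = k)"

definition degree :: "'a set \<Rightarrow> ('a \<Rightarrow> 'a \<Rightarrow> bool) \<Rightarrow> 'a \<Rightarrow> nat" where
  "degree V E v = card {u \<in> V. E v u}"

definition leaf :: "'a set \<Rightarrow> ('a \<Rightarrow> 'a \<Rightarrow> bool) \<Rightarrow> 'a \<Rightarrow> bool" where
  "leaf V E v \<longleftrightarrow> v \<in> V \<and> degree V E v = 1"

definition strong_support_vertex :: "'a set \<Rightarrow> ('a \<Rightarrow> 'a \<Rightarrow> bool) \<Rightarrow> 'a \<Rightarrow> bool" where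
  "strong_support_vertex V E v \<longleftrightarrow> v \<in> V \<and> card {u \<in> V. E v u \<and> leaf V E u} \<ge> 2"

definition num_strong_support :: "'a set \<Rightarrow> ('a \<Rightarrow> 'a \<Rightarrow> bool) \<Rightarrow> nat" where
  "num_strong_support V E = card {v \<in> V. strong_support_vertex V E v}"

definition cart_V :: "'a set \<Rightarrow> 'b set \<Rightarrow> ('a \<times> 'b) set" where
  "cart_V V W = V \<times> W"

definition cart_E :: "('a \<Rightarrow> 'a \<Rightarrow> bool) \<Rightarrow> ('b \<Rightarrow> 'b \<Rightarrow> bool) \<Rightarrow> ('a \<times> 'b) \<Rightarrow> ('a \<times> 'b) \<Rightarrow> bool" where
  "cart_E E F p q \<longleftrightarrow> (fst p = fst q \<and> F (snd p) (snd q)) \<or> (snd p = snd q \<and> E (fst p) (fst q))"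

definition path_V :: "nat \<Rightarrow> nat set" where
  "path_V n = {0..<n}"

definition path_E :: "nat \<Rightarrow> nat \<Rightarrow> nat \<Rightarrow> bool" where
  "path_E n i j \<longleftrightarrow> i < n \<and> j < n \<and> (i + 1 = j \<or> j + 1 = i)"

end

theory Submission
  imports Defs
begin


lemma zf_sub:
  assumes "X \<subseteq> V" and "\<And>u v. u \<in> V \<Longrightarrow> E u v \<Longrightarrow> v \<in> V"
  shows "zf_closure V E X \<subseteq> V"
proof
  fix v assume "v \<in> zf_closure V E X"
  then show "v \<in> V"
    by induction (use assms in blast)+
qed

lemma cn_sub: "closed_nbhd_set V E S \<subseteq> V" if "S \<subseteq> V"
  using that unfolding closed_nbhd_set_def by blast

lemma fort_lemma:
  assumes "X \<inter> Q = {}"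
    and "\<And>p u. p \<in> Q \<Longrightarrow> u \<notin> Q \<Longrightarrow> E u p \<Longrightarrow> \<exists>w. E u w \<and> w \<noteq> p \<and> w \<in> Q"
  shows "zf_closure V E X \<inter> Q = {}"
proof -
  have "v \<in> zf_closure V E X \<Longrightarrow> v \<notin> Q" for v
  proof (induction rule: zf_closure.induct)
    case (base v) then show ?case using assms(1) by blast
  next
    case (force u v)
    then show ?case using assms(2)[of v u] by blast
  qed
  then show ?thesis by blast
qed

lemma graph_in: "graph V E \<Longrightarrow> E x y \<Longrightarrow> x \<in> V \<and> y \<in> V"
  unfolding graph_def by blast
lemma graph_sym: "graph V E \<Longrightarrow> E x y \<Longrightarrow> E y x"
  unfolding graph_def by blast
lemma graph_irr: "graph V E \<Longrightarrow> \<not> E x x"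
  unfolding graph_def by blast

lemma cart_closed:
  assumes "graph V E" "graph W F" "u \<in> cart_V V W" "cart_E E F u v"
  shows "v \<in> cart_V V W"
  using assms unfolding cart_V_def cart_E_def graph_def by (cases u; cases v) auto

lemma pdn_le: "power_dominating_set V E S \<Longrightarrow> power_domination_number V E \<le> card S"
  unfolding power_domination_number_def by (rule Least_le) blast
lemma pdn_ex:
  assumes "power_dominating_set V E S0"
  obtains S where "power_dominating_set V E S" "card S = power_domination_number V E"
proof -
  have "\<exists>k S. power_dominating_set V E S \<and> card S = k" using assms by blast
  from LeastI_ex[OF this] show thesis using that unfolding power_domination_number_def by blast
qed
lemma dn_le: "dominating_set V E S \<Longrightarrow> domination_number V E \<le> card S"
  unfolding domination_number_def by (rule Least_le) blast
lemma dn_ex: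
  assumes "dominating_set V E S0"
  obtains S where "dominating_set V E S" "card S = domination_number V E"
proof -
  have "\<exists>k S. dominating_set V E S \<and> card S = k" using assms by blast
  from LeastI_ex[OF this] show thesis using that unfolding domination_number_def by blast
qed
lemma zfn_ex:
  assumes "zero_forcing_set V E S0"
  obtains S where "zero_forcing_set V E S" "card S = zero_forcing_number V E"
proof -
  have "\<exists>k S. zero_forcing_set V E S \<and> card S = k" using assms by blast
  from LeastI_ex[OF this] show thesis using that unfolding zero_forcing_number_def by blast
qed

lemma dom_V: "dominating_set V E V"
  unfolding dominating_set_def by blast
lemma zf_V: assumes "graph V E" shows "zero_forcing_set V E V"
proof -
  have "zf_closure V E V \<subseteq> V" by (rule zf_sub) (use graph_in[OF assms] in auto)
  moreover have "V \<subseteq> zf_closure V E V" by (auto intro: zf_closure.base)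
  ultimately show ?thesis unfolding zero_forcing_set_def by blast
qed

lemma layer_H:
  assumes gV: "graph V E"
    and T: "V \<times> T \<subseteq> zf_closure V' (cart_E E F) X"
    and h: "h \<in> zf_closure W F T"
  shows "V \<times> {h} \<subseteq> zf_closure V' (cart_E E F) X"
  using h
proof (induction rule: zf_closure.induct)
  case (base v) then show ?case using T by blast
next
  case (force u h)
  show ?case
  proof
    fix p assume p: "p \<in> V \<times> {h}"
    then obtain v where pv: "p = (v, h)" "v \<in> V" by blast
    have "(v, u) \<in> zf_closure V' (cart_E E F) X" using force(3) pv by blast
    moreover have "cart_E E F (v, u) (v, h)" using force(2) unfolding cart_E_def by simp
    moreover have "\<forall>w. cart_E E F (v, u) w \<and> w \<noteq> (v, h) \<longrightarrow> w \<in> zf_closure V' (cart_E E F) X"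
    proof (intro allI impI)
      fix w assume w: "cart_E E F (v, u) w \<and> w \<noteq> (v, h)"
      obtain a b where wab: "w = (a, b)" by (cases w)
      show "w \<in> zf_closure V' (cart_E E F) X"
      proof (cases "a = v \<and> F u b")
        case True
        then have "b \<noteq> h" using w wab by auto
        with force(4) True have "V \<times> {b} \<subseteq> zf_closure V' (cart_E E F) X" by blast
        then show ?thesis using pv True wab by blast
      next
        case False
        then have "b = u" "E v a" using w wab unfolding cart_E_def by auto
        then have "a \<in> V" using graph_in[OF gV] by blast
        then show ?thesis using force(3) \<open>b = u\<close> wab by blast
      qed
    qed
    ultimately show "p \<in> zf_closure V' (cart_E E F) X" using pv zf_closure.force by metis
  qed
qed

lemma layer_G:
  assumes gW: "graph W F"
    and T: "T \<times> W \<subseteq> zf_closure V' (cart_E E F) X"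
    and g: "g \<in> zf_closure V E T"
  shows "{g} \<times> W \<subseteq> zf_closure V' (cart_E E F) X"
  using g
proof (induction rule: zf_closure.induct)
  case (base v) then show ?case using T by blast
next
  case (force u g)
  show ?case
  proof
    fix p assume p: "p \<in> {g} \<times> W"
    then obtain v where pv: "p = (g, v)" "v \<in> W" by blast
    have "(u, v) \<in> zf_closure V' (cart_E E F) X" using force(3) pv by blast
    moreover have "cart_E E F (u, v) (g, v)" using force(2) unfolding cart_E_def by simp
    moreover have "\<forall>w. cart_E E F (u, v) w \<and> w \<noteq> (g, v) \<longrightarrow> w \<in> zf_closure V' (cart_E E F) X"
    proof (intro allI impI)
      fix w assume w: "cart_E E F (u, v) w \<and> w \<noteq> (g, v)"
      obtain a b where wab: "w = (a, b)" by (cases w)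
      show "w \<in> zf_closure V' (cart_E E F) X"
      proof (cases "b = v \<and> E u a")
        case True
        then have "a \<noteq> g" using w wab by auto
        with force(4) True have "{a} \<times> W \<subseteq> zf_closure V' (cart_E E F) X" by blast
        then show ?thesis using pv True wab by blast
      next
        case False
        then have "a = u" "F v b" using w wab unfolding cart_E_def by auto
        then have "b \<in> W" using graph_in[OF gW] by blast
        then show ?thesis using force(3) \<open>a = u\<close> wab by blast
      qed
    qed
    ultimately show "p \<in> zf_closure V' (cart_E E F) X" using pv zf_closure.force by metis
  qed
qed



lemma path_graph: "graph (path_V n) (path_E n)"
  unfolding graph_def path_V_def path_E_def by auto

lemma path_zf: assumes "n \<ge> 1" shows "zero_forcing_set (path_V n) (path_E n) {0}"
proof -
  have "\<forall>j\<le>i. j < n \<longrightarrow> j \<in> zf_closure (path_V n) (path_E n) {0}" for i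
  proof (induction i)
    case 0 then show ?case by (auto intro: zf_closure.base)
  next
    case (Suc i)
    show ?case
    proof (intro allI impI)
      fix j assume j: "j \<le> Suc i" "j < n"
      show "j \<in> zf_closure (path_V n) (path_E n) {0}"
      proof (cases "j \<le> i")
        case True then show ?thesis using Suc j by blast
      next
        case False
        then have jj: "j = Suc i" using j by simp
        have "i \<in> zf_closure (path_V n) (path_E n) {0}" using Suc jj j by simp
        moreover have "path_E n i j" using jj j unfolding path_E_def by simp
        moreover have "\<forall>w. path_E n i w \<and> w \<noteq> j \<longrightarrow> w \<in> zf_closure (path_V n) (path_E n) {0}"
        proof (intro allI impI)
          fix w assume "path_E n i w \<and> w \<noteq> j"
          then have "w \<le> i" "w < n" using jj unfolding path_E_def by auto
          then show "w \<in> zf_closure (path_V n) (path_E n) {0}" using Suc by blast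
        qed
        ultimately show ?thesis by (rule zf_closure.force)
      qed
    qed
  qed
  then have "path_V n \<subseteq> zf_closure (path_V n) (path_E n) {0}"
    unfolding path_V_def by (metis atLeastLessThan_iff le_refl subsetI)
  moreover have "zf_closure (path_V n) (path_E n) {0} \<subseteq> path_V n"
    by (rule zf_sub) (use assms graph_in[OF path_graph] in \<open>auto simp: path_V_def\<close>)
  ultimately show ?thesis using assms unfolding zero_forcing_set_def path_V_def by auto
qed

lemma ub_DZ:
  assumes gV: "graph V E" and gW: "graph W F"
    and D: "dominating_set V E D" and Z: "zero_forcing_set W F Z"
  shows "power_dominating_set (cart_V V W) (cart_E E F) (D \<times> Z)"
proof -
  let ?X = "closed_nbhd_set (cart_V V W) (cart_E E F) (D \<times> Z)"
  let ?C = "zf_closure (cart_V V W) (cart_E E F) ?X"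
  have sub: "D \<times> Z \<subseteq> cart_V V W" using D Z unfolding dominating_set_def zero_forcing_set_def cart_V_def by blast
  have "V \<times> Z \<subseteq> ?X"
  proof
    fix p assume "p \<in> V \<times> Z"
    then obtain v z where p: "p = (v, z)" "v \<in> V" "z \<in> Z" by blast
    show "p \<in> ?X"
    proof (cases "v \<in> D")
      case True then show ?thesis using p unfolding closed_nbhd_set_def by blast
    next
      case False
      then obtain u where u: "u \<in> D" "E u v" using D p unfolding dominating_set_def by blast
      have "cart_E E F (u, z) (v, z)" using u unfolding cart_E_def by simp
      moreover have "(v, z) \<in> cart_V V W" using p Z unfolding zero_forcing_set_def cart_V_def by blast
      ultimately show ?thesis using p u unfolding closed_nbhd_set_def by blast
    qed
  qed
  then have VZ: "V \<times> Z \<subseteq> ?C" by (auto intro: zf_closure.base)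
  have "V \<times> {h} \<subseteq> ?C" if "h \<in> W" for h
    using layer_H[OF gV VZ, of h W] that Z unfolding zero_forcing_set_def by blast
  then have "cart_V V W \<subseteq> ?C" unfolding cart_V_def by blast
  moreover have "?C \<subseteq> cart_V V W"
    by (rule zf_sub[OF cn_sub[OF sub]]) (use cart_closed[OF gV gW] in blast)
  ultimately show ?thesis using sub unfolding power_dominating_set_def by blast
qed

lemma ub_ZD:
  assumes gV: "graph V E" and gW: "graph W F"
    and Z: "zero_forcing_set V E Z" and D: "dominating_set W F D"
  shows "power_dominating_set (cart_V V W) (cart_E E F) (Z \<times> D)"
proof -
  let ?X = "closed_nbhd_set (cart_V V W) (cart_E E F) (Z \<times> D)"
  let ?C = "zf_closure (cart_V V W) (cart_E E F) ?X"
  have sub: "Z \<times> D \<subseteq> cart_V V W" using D Z unfolding dominating_set_def zero_forcing_set_def cart_V_def by blast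
  have "Z \<times> W \<subseteq> ?X"
  proof
    fix p assume "p \<in> Z \<times> W"
    then obtain v z where p: "p = (z, v)" "v \<in> W" "z \<in> Z" by blast
    show "p \<in> ?X"
    proof (cases "v \<in> D")
      case True then show ?thesis using p unfolding closed_nbhd_set_def by blast
    next
      case False
      then obtain u where u: "u \<in> D" "F u v" using D p unfolding dominating_set_def by blast
      have "cart_E E F (z, u) (z, v)" using u unfolding cart_E_def by simp
      moreover have "(z, v) \<in> cart_V V W" using p Z unfolding zero_forcing_set_def cart_V_def by blast
      ultimately show ?thesis using p u unfolding closed_nbhd_set_def by blast
    qed
  qed
  then have ZW: "Z \<times> W \<subseteq> ?C" by (auto intro: zf_closure.base)
  have "{g} \<times> W \<subseteq> ?C" if "g \<in> V" for g
    using layer_G[OF gW ZW, of g V] that Z unfolding zero_forcing_set_def by blast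
  then have "cart_V V W \<subseteq> ?C" unfolding cart_V_def by blast
  moreover have "?C \<subseteq> cart_V V W"
    by (rule zf_sub[OF cn_sub[OF sub]]) (use cart_closed[OF gV gW] in blast)
  ultimately show ?thesis using sub unfolding power_dominating_set_def by blast
qed



lemma proj_pd:
  assumes gV: "graph V E" and gW: "graph W F" and Wne: "W \<noteq> {}"
    and S: "power_dominating_set (cart_V V W) (cart_E E F) S"
  shows "power_dominating_set V E (fst ` S)"
proof -
  have Ssub: "S \<subseteq> V \<times> W" using S unfolding power_dominating_set_def cart_V_def by blast
  then have fS: "fst ` S \<subseteq> V" by auto
  let ?D = "zf_closure V E (closed_nbhd_set V E (fst ` S))"
  have Dsub: "?D \<subseteq> V" by (rule zf_sub[OF cn_sub[OF fS]]) (use graph_in[OF gV] in blast)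
  have NS: "closed_nbhd_set V E (fst ` S) \<subseteq> ?D" by (auto intro: zf_closure.base)
  show ?thesis
  proof (rule ccontr)
    assume "\<not> ?thesis"
    then have "?D \<noteq> V" using fS unfolding power_dominating_set_def by blast
    then obtain v0 where v0: "v0 \<in> V" "v0 \<notin> ?D" using Dsub by blast
    obtain h0 where h0: "h0 \<in> W" using Wne by blast
    define M where "M = V - ?D"
    let ?Q = "M \<times> W"
    let ?X = "closed_nbhd_set (cart_V V W) (cart_E E F) S"
    have XQ: "?X \<inter> ?Q = {}"
    proof (rule ccontr)
      assume "?X \<inter> ?Q \<noteq> {}"
      then obtain v h where vh: "(v, h) \<in> ?X" "v \<in> M" "h \<in> W" by blast
      have "v \<in> closed_nbhd_set V E (fst ` S)"
      proof (cases "(v, h) \<in> S")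
        case True then show ?thesis unfolding closed_nbhd_set_def by force
      next
        case False
        then obtain a k where ak: "(a, k) \<in> S" "cart_E E F (a, k) (v, h)"
          using vh(1) unfolding closed_nbhd_set_def by auto
        show ?thesis
        proof (cases "a = v")
          case True then show ?thesis using ak unfolding closed_nbhd_set_def by force
        next
          case False
          then have "E a v" using ak unfolding cart_E_def by auto
          then show ?thesis using ak vh M_def unfolding closed_nbhd_set_def by force
        qed
      qed
      then show False using NS vh M_def by blast
    qed
    have fort: "\<exists>w. cart_E E F u w \<and> w \<noteq> p \<and> w \<in> ?Q"
      if p: "p \<in> ?Q" and u: "u \<notin> ?Q" and up: "cart_E E F u p" for p u
    proof -
      obtain v h where pvh: "p = (v, h)" "v \<in> M" "h \<in> W" using p by blast
      obtain a k where uak: "u = (a, k)" by (cases u)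
      show ?thesis
      proof (cases "a = v \<and> F k h")
        case True
        then have "k \<in> W" using graph_in[OF gW] by blast
        then show ?thesis using u uak True pvh by blast
      next
        case False
        then have kh: "k = h" and av: "E a v" using up uak pvh unfolding cart_E_def by auto
        have aV: "a \<in> V" using graph_in[OF gV av] by blast
        have aD: "a \<in> ?D" using u uak kh pvh aV M_def by blast
        have "\<exists>w. E a w \<and> w \<noteq> v \<and> w \<notin> ?D"
        proof (rule ccontr)
          assume "\<not> (\<exists>w. E a w \<and> w \<noteq> v \<and> w \<notin> ?D)"
          then have "\<forall>w. E a w \<and> w \<noteq> v \<longrightarrow> w \<in> ?D" by blast
          then have "v \<in> ?D" using zf_closure.force[OF aD av] by blast
          then show False using pvh M_def by blast
        qed
        then obtain w where w: "E a w" "w \<noteq> v" "w \<notin> ?D" by blast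
        have "w \<in> M" using w graph_in[OF gV w(1)] M_def by blast
        moreover have "cart_E E F u (w, h)" using w uak kh unfolding cart_E_def by simp
        ultimately show ?thesis using pvh w by blast
      qed
    qed
    have "zf_closure (cart_V V W) (cart_E E F) ?X \<inter> ?Q = {}"
      by (rule fort_lemma[OF XQ]) (use fort in blast)
    moreover have "zf_closure (cart_V V W) (cart_E E F) ?X = cart_V V W"
      using S unfolding power_dominating_set_def by blast
    moreover have "(v0, h0) \<in> ?Q" using v0 h0 M_def by blast
    ultimately show False unfolding cart_V_def M_def by blast
  qed
qed

lemma leaf_nb:
  assumes g: "graph V E" and l: "leaf V E z" and xz: "E x z" and zw: "E z w"
  shows "w = x"
proof -
  have c: "card {u \<in> V. E z u} = 1" using l unfolding leaf_def degree_def by blast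
  have "x \<in> {u \<in> V. E z u}" "w \<in> {u \<in> V. E z u}"
    using graph_in[OF g] graph_sym[OF g] xz zw by blast+
  then show ?thesis using c by (metis card_1_singletonE singletonD)
qed

lemma two_elems: "2 \<le> card A \<Longrightarrow> \<exists>a b. a \<in> A \<and> b \<in> A \<and> a \<noteq> b"
  by (metis One_nat_def card.infinite card_le_Suc0_iff_eq not_less_eq_eq numeral_2_eq_2 zero_le)

lemma ss_two:
  assumes "strong_support_vertex V E x"
  obtains a b where "a \<noteq> b" "E x a" "leaf V E a" "E x b" "leaf V E b"
  using two_elems[of "{u \<in> V. E x u \<and> leaf V E u}"] assms that
  unfolding strong_support_vertex_def by blast

definition LL :: "'a set \<Rightarrow> ('a \<Rightarrow> 'a \<Rightarrow> bool) \<Rightarrow> 'a \<Rightarrow> 'a set" where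
  "LL V E x = {x} \<union> {z. E x z \<and> leaf V E z}"

lemma LL_disj:
  assumes g: "graph V E" and x: "strong_support_vertex V E x" and x': "strong_support_vertex V E x'"
    and z: "z \<in> LL V E x" "z \<in> LL V E x'"
  shows "x = x'"
proof -
  have nl: "\<not> (E y s \<and> leaf V E s)" if ss: "strong_support_vertex V E s" for y s
  proof
    assume a: "E y s \<and> leaf V E s"
    obtain a1 b1 where ab: "a1 \<noteq> b1" "E s a1" "E s b1" using ss_two[OF ss] by metis
    have "a1 = y" using leaf_nb[OF g _ _ ab(2)] a by blast
    moreover have "b1 = y" using leaf_nb[OF g _ _ ab(3)] a by blast
    ultimately show False using ab(1) by simp
  qed
  consider "z = x" | "E x z" "leaf V E z" using z(1) unfolding LL_def by blast
  then show ?thesis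
  proof cases
    case 1
    then show ?thesis using z(2) nl[OF x, of x'] unfolding LL_def by blast
  next
    case 2
    consider "z = x'" | "E x' z" "leaf V E z" using z(2) unfolding LL_def by blast
    then show ?thesis
    proof cases
      case 1 then show ?thesis using 2 nl[OF x', of x] by blast
    next
      case 3: 2
      have "E z x'" using graph_sym[OF g 3(1)] .
      from leaf_nb[OF g 2(2) 2(1) this] show ?thesis by simp
    qed
  qed
qed



lemma ss_hit:
  assumes gV: "graph V E" and gW: "graph W F"
    and x: "strong_support_vertex V E x" and y: "strong_support_vertex W F y"
    and S: "power_dominating_set (cart_V V W) (cart_E E F) S"
  shows "\<exists>p\<in>S. p \<in> LL V E x \<times> LL W F y"
proof (rule ccontr)
  assume nS: "\<not> ?thesis"
  obtain a1 a2 where a: "a1 \<noteq> a2" "E x a1" "leaf V E a1" "E x a2" "leaf V E a2"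
    using ss_two[OF x] by metis
  obtain b1 b2 where b: "b1 \<noteq> b2" "F y b1" "leaf W F b1" "F y b2" "leaf W F b2"
    using ss_two[OF y] by metis
  let ?A = "{a1, a2}" let ?B = "{b1, b2}"
  let ?Q = "?A \<times> ?B"
  have QL: "?Q \<subseteq> LL V E x \<times> LL W F y" using a b unfolding LL_def by blast
  have nbA: "g = x" if "aa \<in> ?A" "E aa g" for aa g
  proof -
    have "aa = a1 \<or> aa = a2" using that(1) by blast
    then show ?thesis using leaf_nb[OF gV a(3) a(2), of g] leaf_nb[OF gV a(5) a(4), of g] that(2) by blast
  qed
  have nbB: "g = y" if "bb \<in> ?B" "F bb g" for bb g
  proof -
    have "bb = b1 \<or> bb = b2" using that(1) by blast
    then show ?thesis using leaf_nb[OF gW b(3) b(2), of g] leaf_nb[OF gW b(5) b(4), of g] that(2) by blast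
  qed
  have nbu: "u = (x, snd p) \<or> u = (fst p, y)" if pq: "p \<in> ?Q" and ce: "cart_E E F u p" for u p
  proof -
    obtain aa bb where p: "p = (aa, bb)" "aa \<in> ?A" "bb \<in> ?B" using pq by blast
    obtain c d where u: "u = (c, d)" by (cases u)
    have "(c = aa \<and> F d bb) \<or> (d = bb \<and> E c aa)" using ce p u unfolding cart_E_def by simp
    then show ?thesis
    proof
      assume h: "c = aa \<and> F d bb"
      then have "d = y" using nbB[of bb d] p(3) graph_sym[OF gW, of d bb] by blast
      then show ?thesis using h p u by simp
    next
      assume h: "d = bb \<and> E c aa"
      then have "c = x" using nbA[of aa c] p(2) graph_sym[OF gV, of c aa] by blast
      then show ?thesis using h p u by simp
    qed
  qed
  let ?X = "closed_nbhd_set (cart_V V W) (cart_E E F) S"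
  have XQ: "?X \<inter> ?Q = {}"
  proof (rule ccontr)
    assume "?X \<inter> ?Q \<noteq> {}"
    then obtain p where p: "p \<in> ?X" "p \<in> ?Q" by blast
    show False
    proof (cases "p \<in> S")
      case True then show ?thesis using QL p nS by blast
    next
      case False
      then obtain u where "u \<in> S" "cart_E E F u p" using p unfolding closed_nbhd_set_def by blast
      obtain aa bb where pp: "p = (aa, bb)" "aa \<in> ?A" "bb \<in> ?B" using p(2) by blast
      have l1: "aa \<in> LL V E x" "bb \<in> LL W F y" using pp QL by auto
      have l2: "x \<in> LL V E x" "y \<in> LL W F y" unfolding LL_def by simp_all
      have "u = (x, bb) \<or> u = (aa, y)" using nbu[OF p(2) \<open>cart_E E F u p\<close>] pp by simp
      then have "u \<in> LL V E x \<times> LL W F y" using l1 l2 by auto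
      then show False using nS \<open>u \<in> S\<close> by blast
    qed
  qed
  have fort: "\<exists>w. cart_E E F u w \<and> w \<noteq> p \<and> w \<in> ?Q"
    if p: "p \<in> ?Q" and up: "cart_E E F u p" for p u
  proof -
    obtain aa bb where pp: "p = (aa, bb)" "aa \<in> ?A" "bb \<in> ?B" using p by blast
    obtain aa' where aa': "aa' \<in> ?A" "aa' \<noteq> aa" using pp a(1) by blast
    obtain bb' where bb': "bb' \<in> ?B" "bb' \<noteq> bb" using pp b(1) by blast
    from nbu[OF p up] show ?thesis
    proof
      assume h: "u = (x, snd p)"
      have "E x aa'" using aa' a by blast
      then have "cart_E E F u (aa', bb)" using h pp unfolding cart_E_def by simp
      moreover have "(aa', bb) \<noteq> p" using pp aa' by simp
      moreover have "(aa', bb) \<in> ?Q" using aa' pp by auto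
      ultimately show ?thesis by blast
    next
      assume h: "u = (fst p, y)"
      have "F y bb'" using bb' b by blast
      then have "cart_E E F u (aa, bb')" using h pp unfolding cart_E_def by simp
      moreover have "(aa, bb') \<noteq> p" using pp bb' by simp
      moreover have "(aa, bb') \<in> ?Q" using bb' pp by auto
      ultimately show ?thesis by blast
    qed
  qed
  have "zf_closure (cart_V V W) (cart_E E F) ?X \<inter> ?Q = {}"
    by (rule fort_lemma[OF XQ]) (rule fort; assumption)
  moreover have "zf_closure (cart_V V W) (cart_E E F) ?X = cart_V V W"
    using S unfolding power_dominating_set_def by blast
  moreover have "a1 \<in> V" "b1 \<in> W" using a b unfolding leaf_def by blast+
  ultimately have "cart_V V W \<inter> ?Q = {}" by simp
  moreover have "(a1, b1) \<in> cart_V V W" unfolding cart_V_def using \<open>a1 \<in> V\<close> \<open>b1 \<in> W\<close> by simp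
  moreover have "(a1, b1) \<in> ?Q" by simp
  ultimately show False by blast
qed

lemma lb3:
  assumes gV: "graph V E" and gW: "graph W F"
    and S: "power_dominating_set (cart_V V W) (cart_E E F) S"
  shows "num_strong_support V E * num_strong_support W F \<le> card S"
proof -
  let ?A = "{v \<in> V. strong_support_vertex V E v}"
  let ?B = "{v \<in> W. strong_support_vertex W F v}"
  define f where "f = (\<lambda>(x, y). SOME p. p \<in> S \<and> p \<in> LL V E x \<times> LL W F y)"
  have fin: "finite S"
  proof -
    have "S \<subseteq> V \<times> W" using S unfolding power_dominating_set_def cart_V_def by blast
    moreover have "finite V" "finite W" using gV gW unfolding graph_def by blast+
    ultimately show ?thesis using finite_subset by blast
  qed
  have fp: "f (x, y) \<in> S \<and> f (x, y) \<in> LL V E x \<times> LL W F y" if "(x, y) \<in> ?A \<times> ?B" for x y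
    unfolding f_def using ss_hit[OF gV gW _ _ S, of x y] that
    by (simp, metis (mono_tags, lifting) someI_ex)
  have "inj_on f (?A \<times> ?B)"
  proof (rule inj_onI)
    fix p q assume p: "p \<in> ?A \<times> ?B" and q: "q \<in> ?A \<times> ?B" and e: "f p = f q"
    obtain x y where pxy: "p = (x, y)" by (cases p)
    obtain x' y' where qxy: "q = (x', y')" by (cases q)
    have "fst (f p) \<in> LL V E x" "snd (f p) \<in> LL W F y" using fp[of x y] p pxy by auto
    moreover have "fst (f p) \<in> LL V E x'" "snd (f p) \<in> LL W F y'" using fp[of x' y'] q qxy e by auto
    ultimately have "x = x'" "y = y'"
      using LL_disj[OF gV, of x x'] LL_disj[OF gW, of y y'] p q pxy qxy by auto
    then show "p = q" using pxy qxy by simp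
  qed
  moreover have "f ` (?A \<times> ?B) \<subseteq> S" using fp by auto
  ultimately have "card (?A \<times> ?B) \<le> card S" using card_inj_on_le fin by blast
  then show ?thesis unfolding num_strong_support_def by (simp add: card_cartesian_product)
qed



lemma pd_fin:
  assumes "graph V E" "graph W F" "power_dominating_set (cart_V V W) (cart_E E F) S"
  shows "finite S"
proof -
  have "S \<subseteq> V \<times> W" using assms(3) unfolding power_dominating_set_def cart_V_def by blast
  moreover have "finite V" "finite W" using assms(1,2) unfolding graph_def by blast+
  ultimately show ?thesis using finite_subset by blast
qed

lemma lower_proj:
  assumes gV: "graph V E" and gW: "graph W F" and Wne: "W \<noteq> {}"
    and P: "power_dominating_set (cart_V V W) (cart_E E F) P"
  shows "power_domination_number V E \<le> power_domination_number (cart_V V W) (cart_E E F)"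
proof -
  obtain S where S: "power_dominating_set (cart_V V W) (cart_E E F) S"
    "card S = power_domination_number (cart_V V W) (cart_E E F)" using pdn_ex[OF P] by blast
  have "power_domination_number V E \<le> card (fst ` S)"
    by (rule pdn_le[OF proj_pd[OF gV gW Wne S(1)]])
  also have "\<dots> \<le> card S" by (rule card_image_le[OF pd_fin[OF gV gW S(1)]])
  finally show ?thesis using S(2) by simp
qed

theorem corollary3p9:
  fixes V :: "'a set" and E :: "'a \<Rightarrow> 'a \<Rightarrow> bool"
    and W :: "'b set" and F :: "'b \<Rightarrow> 'b \<Rightarrow> bool"
  assumes G: "connected_graph V E"
  shows "(power_domination_number V E = domination_number V E \<longrightarrow>
            (\<forall>n\<ge>1. power_domination_number (cart_V V (path_V n)) (cart_E E (path_E n))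
                     = domination_number V E))
       \<and> (power_domination_number V E = zero_forcing_number V E \<and>
          connected_graph W F \<and> domination_number W F = 1 \<longrightarrow>
            power_domination_number (cart_V V W) (cart_E E F) = zero_forcing_number V E)
       \<and> (connected_graph W F \<and> num_strong_support V E = domination_number V E \<and>
          num_strong_support W F = zero_forcing_number W F \<longrightarrow>
            power_domination_number (cart_V V W) (cart_E E F)
              = domination_number V E * zero_forcing_number W F)"
proof (intro conjI impI allI)
  have gV: "graph V E" using G unfolding connected_graph_def by blast
  obtain D where D: "dominating_set V E D" "card D = domination_number V E"
    using dn_ex[OF dom_V] by blast
  {
    assume eq: "power_domination_number V E = domination_number V E"
    fix n :: nat assume n: "n \<ge> 1"
    have PD: "power_dominating_set (cart_V V (path_V n)) (cart_E E (path_E n)) (D \<times> {0})"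
      by (rule ub_DZ[OF gV path_graph D(1) path_zf[OF n]])
    have "power_domination_number (cart_V V (path_V n)) (cart_E E (path_E n)) \<le> card (D \<times> {0::nat})"
      by (rule pdn_le[OF PD])
    also have "\<dots> = domination_number V E" using D(2) by (simp add: card_cartesian_product)
    finally have up: "power_domination_number (cart_V V (path_V n)) (cart_E E (path_E n)) \<le> domination_number V E" .
    have "path_V n \<noteq> {}" using n unfolding path_V_def by auto
    from lower_proj[OF gV path_graph this PD] eq up
    show "power_domination_number (cart_V V (path_V n)) (cart_E E (path_E n)) = domination_number V E"
      by simp
  }
  {
    assume h: "power_domination_number V E = zero_forcing_number V E \<and>
          connected_graph W F \<and> domination_number W F = 1"
    have gW: "graph W F" and Wne: "W \<noteq> {}" using h unfolding connected_graph_def by blast+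
    obtain Z where Z: "zero_forcing_set V E Z" "card Z = zero_forcing_number V E"
      using zfn_ex[OF zf_V[OF gV]] by blast
    obtain Dh where Dh: "dominating_set W F Dh" "card Dh = 1"
      using dn_ex[OF dom_V, of W F] h by metis
    have PD: "power_dominating_set (cart_V V W) (cart_E E F) (Z \<times> Dh)"
      by (rule ub_ZD[OF gV gW Z(1) Dh(1)])
    have "power_domination_number (cart_V V W) (cart_E E F) \<le> card (Z \<times> Dh)"
      by (rule pdn_le[OF PD])
    also have "\<dots> = zero_forcing_number V E" using Z(2) Dh(2) by (simp add: card_cartesian_product)
    finally have up: "power_domination_number (cart_V V W) (cart_E E F) \<le> zero_forcing_number V E" .
    from lower_proj[OF gV gW Wne PD] h up
    show "power_domination_number (cart_V V W) (cart_E E F) = zero_forcing_number V E" by simp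
  }
  {
    assume h: "connected_graph W F \<and> num_strong_support V E = domination_number V E \<and>
          num_strong_support W F = zero_forcing_number W F"
    have gW: "graph W F" using h unfolding connected_graph_def by blast
    obtain Z where Z: "zero_forcing_set W F Z" "card Z = zero_forcing_number W F"
      using zfn_ex[OF zf_V[OF gW]] by blast
    have PD: "power_dominating_set (cart_V V W) (cart_E E F) (D \<times> Z)"
      by (rule ub_DZ[OF gV gW D(1) Z(1)])
    have "power_domination_number (cart_V V W) (cart_E E F) \<le> card (D \<times> Z)"
      by (rule pdn_le[OF PD])
    also have "\<dots> = domination_number V E * zero_forcing_number W F"
      using Z(2) D(2) by (simp add: card_cartesian_product)
    finally have up: "power_domination_number (cart_V V W) (cart_E E F) \<le> domination_number V E * zero_forcing_number W F" .
    obtain S where S: "power_dominating_set (cart_V V W) (cart_E E F) S"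
      "card S = power_domination_number (cart_V V W) (cart_E E F)" using pdn_ex[OF PD] by blast
    from lb3[OF gV gW S(1)] S(2) h up
    show "power_domination_number (cart_V V W) (cart_E E F) = domination_number V E * zero_forcing_number W F"
      by simp
  }
qed

end
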